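(* If $\pi$ is a Fishburn permutation, then $\upsilon(\pi)=\tilde\upsilon(\pi)$.
   Context: A permutation $\pi$ of $[n]$ is Fishburn if there are no indices $i$ and $k>i+1$ with $\pi(i)<\pi(i+1)$ and $\pi(k)=\pi(i)-1$. For $i\in[n]$ let $J(i)=0$ if $\pi(i)=1$, and otherwise let $J(i)$ be the index with $\pi(J(i))=\pi(i)-1$. The sites of $\pi$ are the site before $\pi(1)$ and the site after $\pi(i)$ for each $i\in[n]$. Fishburn-active sites: the site before $\pi(1)$ is active, and the site after $\pi(i)$ is active iff $J(i)<i$. $\eta$-active sites: the site before $\pi(1)$ is $\eta$-active, and the site after $\pi(i)$ is $\eta$-active iff $J(i)<i$, or $i<n$ and $\pi(i)<\pi(i+1)$. $\upsilon(\pi)$ (resp. $\tilde\upsilon(\pi)$) is the word of length $n$ whose $j$-th letter is the number of Fishburn-active (resp. $\eta$-active) sites to the left of $\pi(j)$. *)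

theory Defs
  imports Main
begin

text \<open>A permutation of [n] is a function pi :: nat => nat that is a bijection
  of {1..n} onto itself; positions and values are 1-based.\<close>

definition is_perm :: "nat \<Rightarrow> (nat \<Rightarrow> nat) \<Rightarrow> bool" where
  "is_perm n pi \<longleftrightarrow> bij_betw pi {1..n} {1..n}"

definition fishburn :: "nat \<Rightarrow> (nat \<Rightarrow> nat) \<Rightarrow> bool" where
  "fishburn n pi \<longleftrightarrow> is_perm n pi \<and>
     \<not> (\<exists>i k. 1 \<le> i \<and> k \<le> n \<and> k > i + 1 \<and> pi i < pi (i + 1) \<and> pi k + 1 = pi i)"

definition Jidx :: "nat \<Rightarrow> (nat \<Rightarrow> nat) \<Rightarrow> nat \<Rightarrow> nat" where
  "Jidx n pi i = (if pi i = 1 then 0 else (THE j. j \<in> {1..n} \<and> pi j = pi i - 1))"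

text \<open>Sites are numbered 0..n: site 0 is before pi(1), site i (1 <= i <= n) is after pi(i).\<close>
definition fish_active :: "nat \<Rightarrow> (nat \<Rightarrow> nat) \<Rightarrow> nat \<Rightarrow> bool" where
  "fish_active n pi s \<longleftrightarrow> s = 0 \<or> (1 \<le> s \<and> s \<le> n \<and> Jidx n pi s < s)"

definition eta_active :: "nat \<Rightarrow> (nat \<Rightarrow> nat) \<Rightarrow> nat \<Rightarrow> bool" where
  "eta_active n pi s \<longleftrightarrow> s = 0 \<or>
     (1 \<le> s \<and> s \<le> n \<and> (Jidx n pi s < s \<or> (s < n \<and> pi s < pi (s + 1))))"

text \<open>The j-th letter counts active sites to the left of pi(j), i.e. sites 0..j-1.\<close>
definition upsilon :: "nat \<Rightarrow> (nat \<Rightarrow> nat) \<Rightarrow> nat list" where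
  "upsilon n pi = map (\<lambda>j. card {s. s < j \<and> fish_active n pi s}) [1..<n+1]"

definition upsilon_tilde :: "nat \<Rightarrow> (nat \<Rightarrow> nat) \<Rightarrow> nat list" where
  "upsilon_tilde n pi = map (\<lambda>j. card {s. s < j \<and> eta_active n pi s}) [1..<n+1]"

end

theory Submission
  imports Defs
begin

lemma act_eq:
  assumes F: "fishburn n pi"
  shows "fish_active n pi s = eta_active n pi s"
proof -
  have P: "bij_betw pi {1..n} {1..n}" using F unfolding fishburn_def is_perm_def by blast
  have key: "Jidx n pi s < s" if s1: "1 \<le> s" and sn: "s < n" and lt: "pi s < pi (s + 1)"
  proof (cases "pi s = 1")
    case True then show ?thesis using s1 by (simp add: Jidx_def)
  next
    case False
    have psin: "pi s \<in> {1..n}" using P s1 sn bij_betwE by fastforce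
    hence "pi s - 1 \<in> {1..n}" using False by auto
    then obtain j where j: "j \<in> {1..n}" "pi j = pi s - 1"
      using P by (metis bij_betw_iff_bijections)
    have uniq: "\<And>j'. j' \<in> {1..n} \<and> pi j' = pi s - 1 \<Longrightarrow> j' = j"
      using P j unfolding bij_betw_def inj_on_def by metis
    have Jj: "Jidx n pi s = j" unfolding Jidx_def using False j uniq
      by (auto intro!: the_equality)
    have "j \<noteq> s" using j False psin by auto
    moreover have "j \<noteq> s + 1" using j lt by (metis diff_le_self leD)
    moreover have "\<not> (j > s + 1)"
    proof
      assume "j > s + 1"
      moreover have "pi j + 1 = pi s" using j False psin by auto
      moreover have "j \<le> n" using j by simp
      ultimately show False using F s1 lt unfolding fishburn_def by blast
    qed
    ultimately show ?thesis using Jj by simp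
  qed
  show ?thesis unfolding fish_active_def eta_active_def using key by auto
qed

theorem lemma7p1:
  fixes n :: nat and pi :: "nat \<Rightarrow> nat"
  assumes "fishburn n pi"
  shows "upsilon n pi = upsilon_tilde n pi"
  unfolding upsilon_def upsilon_tilde_def using act_eq[OF assms] by simp

end
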